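(* For every integer $i > 0$, the limit defining $d(W,\sigma^iW)$ exists if and only if the limit defining $d_0(W,\sigma^iW)$ exists, and in that case $$d(W,\sigma^i W) = \tfrac{4}{3}\, d_0(W,\sigma^i W).$$
   Context: Words are finite strings over $\{0,1\}$; $\alpha(i)$ is the $i$-th letter and $|\alpha|$ the length. Define $W_0 = 0$, $W_{m+1} = W_m W_m 1 W_m$, and let $W=W(0)W(1)\cdots$ (indexed from $0$) be the unique infinite word having every $W_m$ as an initial segment. For words $\alpha,\beta$ of equal length, the Hamming distance is $d(\alpha,\beta) = |\{i:\alpha(i)\ne\beta(i)\}|/|\alpha|$, and (if $\alpha$ contains a $0$) $d_0(\alpha,\beta) = |\{i : \alpha(i)=0,\ \beta(i)=1\}|/|\{i:\alpha(i)=0\}|$. For $i>0$ and $n\ge0$ let $\alpha_n = W(i)W(i+1)\cdots W(i+|W_n|-1)$ be the subword of $W$ of length $|W_n|$ starting at position $i$, and define $d(W,\sigma^iW) = \lim_{n\to\infty} d(W_n,\alpha_n)$ and $d_0(W,\sigma^iW) = \lim_{n\to\infty} d_0(W_n,\alpha_n)$. *)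

theory Defs
  imports Complex_Main
begin

text \<open>Finite words over {0,1} are lists of naturals with letters 0 and 1.\<close>

fun Wm :: "nat \<Rightarrow> nat list" where
  "Wm 0 = [0]"
| "Wm (Suc m) = Wm m @ Wm m @ [1] @ Wm m"

text \<open>The infinite word W (indexed from 0): the unique word having every W_m as a prefix.\<close>
definition Winf :: "nat \<Rightarrow> nat" where
  "Winf = (THE w. \<forall>m. \<forall>i < length (Wm m). w i = Wm m ! i)"

definition hdist :: "nat list \<Rightarrow> nat list \<Rightarrow> real" where
  "hdist a b = real (card {i. i < length a \<and> a ! i \<noteq> b ! i}) / real (length a)"

text \<open>The distance d_0 (meaningful when a contains a 0).\<close>
definition hdist0 :: "nat list \<Rightarrow> nat list \<Rightarrow> real" where
  "hdist0 a b = real (card {i. i < length a \<and> a ! i = 0 \<and> b ! i = 1})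
              / real (card {i. i < length a \<and> a ! i = 0})"

definition alpha :: "nat \<Rightarrow> nat \<Rightarrow> nat list" where
  "alpha i n = map (\<lambda>j. Winf (i + j)) [0..<length (Wm n)]"

end

theory Submission
  imports Defs
begin

lemma Wm_len: "2 * length (Wm m) + 1 = 3 ^ (Suc m)"
  by (induction m) auto

lemma Wm_len_ge: "length (Wm m) \<ge> Suc m"
  by (induction m) auto

lemma Wm_sum: "2 * sum_list (Wm m) + 1 = 3 ^ m"
  by (induction m) auto

lemma Wm_set: "set (Wm m) \<subseteq> {0,1}"
  by (induction m) auto

lemma Wm_prefix: "n \<le> m \<Longrightarrow> take (length (Wm n)) (Wm m) = Wm n"
proof (induction m rule: dec_induct)
  case base then show ?case by simp
next
  case (step m)
  have "length (Wm n) \<le> length (Wm m)" using step(3)[symmetric]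
    by (metis length_take min.absorb_iff1 nat_le_linear take_all)
  then show ?case using step(3) by simp
qed

lemma Wm_suffix: "n \<le> m \<Longrightarrow> drop (length (Wm m) - length (Wm n)) (Wm m) = Wm n"
proof (induction m rule: dec_induct)
  case base then show ?case by simp
next
  case (step m)
  have "length (Wm n) \<le> length (Wm m)" using step(3)
    by (metis diff_le_self length_drop)
  then show ?case using step(3) by (simp add: Suc_diff_le)
qed

lemma Wm_len_mono: "n \<le> m \<Longrightarrow> length (Wm n) \<le> length (Wm m)"
  by (metis Wm_suffix diff_le_self length_drop)

lemma Wm_nth_agree:
  assumes "k < length (Wm m)" "k < length (Wm m')"
  shows "Wm m ! k = Wm m' ! k"
proof -
  have *: "Wm a ! k = Wm b ! k" if "a \<le> b" "k < length (Wm a)" for a b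
    using Wm_prefix[OF that(1)] that(2) by (metis nth_take)
  show ?thesis using assms *
    by (metis nat_le_linear)
qed

lemma Winf_nth: "k < length (Wm m) \<Longrightarrow> Winf k = Wm m ! k"
proof -
  define w where "w = (\<lambda>k. Wm k ! k)"
  have P: "\<forall>m. \<forall>i < length (Wm m). w i = Wm m ! i"
    unfolding w_def using Wm_len_ge Wm_nth_agree
    by (metis Suc_le_eq)
  have "Winf = w"
    unfolding Winf_def
  proof (rule the_equality)
    show "\<forall>m. \<forall>i < length (Wm m). w i = Wm m ! i" by (rule P)
  next
    fix w' assume "\<forall>m. \<forall>i < length (Wm m). w' i = Wm m ! i"
    then show "w' = w" unfolding w_def using Wm_len_ge
      by (metis Suc_le_eq ext)
  qed
  then show "k < length (Wm m) \<Longrightarrow> Winf k = Wm m ! k" using P by simp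
qed

lemma alpha_eq:
  assumes "n \<le> M" "i + length (Wm n) \<le> length (Wm M)"
  shows "alpha i n = take (length (Wm n)) (drop i (Wm M))"
  unfolding alpha_def
  by (rule nth_equalityI) (use assms in \<open>auto simp: Winf_nth\<close>)

lemma td_in: "length xs = L \<Longrightarrow> j + k \<le> L \<Longrightarrow> take k (drop j (xs @ ys)) = take k (drop j xs)"
  by simp

lemma td_out: "length xs = L \<Longrightarrow> L \<le> j \<Longrightarrow> take k (drop j (xs @ ys)) = take k (drop (j - L) ys)"
  by simp

lemma td_straddle: "length xs = L \<Longrightarrow> j \<le> L \<Longrightarrow> L \<le> j + k \<Longrightarrow>
   take k (drop j (xs @ ys)) = drop j xs @ take (k - (L - j)) ys"
  by simp

lemma sum_split_nth:
  assumes "b < length (xs::nat list)"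
  shows "sum_list xs = sum_list (take b xs) + xs ! b + sum_list (drop (Suc b) xs)"
proof -
  have "sum_list xs = sum_list (take b xs @ xs ! b # drop (Suc b) xs)"
    by (rule arg_cong[OF id_take_nth_drop[OF assms]])
  also have "\<dots> = sum_list (take b xs) + xs ! b + sum_list (drop (Suc b) xs)" by simp
  finally show ?thesis .
qed

lemma window:
  assumes "n \<le> m" "j + length (Wm n) \<le> length (Wm m)"
  shows "sum_list (take (length (Wm n)) (drop j (Wm m))) \<in> {sum_list (Wm n), Suc (sum_list (Wm n))}"
  using assms
proof (induction m arbitrary: j rule: dec_induct)
  case base
  then show ?case by simp
next
  case (step m)
  define X where "X = Wm m"
  define W where "W = Wm n"
  define Ln where "Ln = length W"
  define Lm where "Lm = length X"
  have LnLm: "Ln \<le> Lm" unfolding Ln_def Lm_def W_def X_def using Wm_len_mono step(1) by simp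
  have Wpos: "Ln \<ge> 1" unfolding Ln_def W_def using Wm_len_ge[of n] by simp
  have pre: "take k X = take k W" if "k \<le> Ln" for k
    using Wm_prefix[OF step(1)] that unfolding X_def W_def Ln_def
    by (metis min.absorb1 take_take)
  have suf: "drop (Lm - Ln + c) X = drop c W" for c
    using Wm_suffix[OF step(1)] unfolding X_def W_def Ln_def Lm_def
    by (metis drop_drop add.commute)
  have IH: "sum_list (take Ln (drop j' X)) \<in> {sum_list W, Suc (sum_list W)}" if "j' + Ln \<le> Lm" for j'
    using step(3)[of j'] that unfolding X_def W_def Ln_def Lm_def by simp
  have LmX: "length X = Lm" unfolding Lm_def ..
  have WS: "Wm (Suc m) = X @ X @ [1] @ X" unfolding X_def by simp
  have jb: "j + Ln \<le> 3 * Lm + 1" using step(4) unfolding WS Ln_def W_def Lm_def by simp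
  have Wset: "W ! b \<le> 1" if "b < Ln" for b
    using Wm_set[of n] that unfolding W_def Ln_def
    by (metis insert_iff le_numeral_extra(1,4) nth_mem singletonD subsetD)
  consider "j + Ln \<le> Lm" | "j < Lm" "Lm < j + Ln" | "Lm \<le> j" "j + Ln \<le> 2 * Lm"
    | "j \<le> 2 * Lm" "2 * Lm < j + Ln" | "2 * Lm < j" by linarith
  then show ?case
  proof cases
    case 1
    have e: "take Ln (drop j (X @ (X @ [1] @ X))) = take Ln (drop j X)"
      by (rule td_in[OF LmX]) (use 1 in simp)
    show ?thesis unfolding WS W_def[symmetric] Ln_def[symmetric] e
      using IH[of j] 1 by simp
  next
    case 2
    define c where "c = j - (Lm - Ln)"
    have jc: "j = Lm - Ln + c" unfolding c_def using 2 by simp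
    have "take Ln (drop j (X @ (X @ [1] @ X))) = drop j X @ take (Ln - (Lm - j)) (X @ [1] @ X)"
      by (rule td_straddle[OF LmX]) (use 2 LnLm in \<open>simp_all add: LmX\<close>)
    also have "take (Ln - (Lm - j)) (X @ [1] @ X) = take c X"
      using 2 LnLm unfolding c_def Lm_def by (simp add: add.commute)
    also have "\<dots> = take c W" using pre[of c] 2 LnLm unfolding c_def by simp
    also have "drop j X = drop c W" using suf jc by simp
    finally have "take Ln (drop j (X @ (X @ [1] @ X))) = drop c W @ take c W" .
    then have e: "sum_list (take Ln (drop j (X @ (X @ [1] @ X)))) = sum_list W"
      by (metis add.commute append_take_drop_id sum_list_append)
    show ?thesis unfolding WS W_def[symmetric] Ln_def[symmetric] e by simp
  next
    case 3
    have "take Ln (drop j (X @ (X @ [1] @ X))) = take Ln (drop (j - Lm) (X @ [1] @ X))"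
      by (rule td_out[OF LmX]) (use 3 LnLm in \<open>simp_all add: LmX\<close>)
    also have "\<dots> = take Ln (drop (j - Lm) X)"
      by (rule td_in[OF LmX]) (use 3 LnLm in \<open>simp_all add: LmX\<close>) 
    finally have e: "take Ln (drop j (X @ (X @ [1] @ X))) = take Ln (drop (j - Lm) X)" .
    show ?thesis unfolding WS W_def[symmetric] Ln_def[symmetric] e
      using IH[of "j - Lm"] 3 by simp
  next
    case 4
    define b where "b = Ln - (2 * Lm - j) - 1"
    have bL: "b < Ln" unfolding b_def using Wpos by simp
    have jb2: "j - Lm = Lm - Ln + Suc b" unfolding b_def using 4 LnLm by linarith
    have "take Ln (drop j (X @ (X @ [1] @ X))) = take Ln (drop (j - Lm) (X @ [1] @ X))"
      by (rule td_out[OF LmX]) (use 4 LnLm in \<open>simp_all add: LmX\<close>)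
    also have "\<dots> = drop (j - Lm) X @ take (Ln - (Lm - (j - Lm))) ([1] @ X)"
      by (rule td_straddle[OF LmX]) (use 4 LnLm in \<open>simp_all add: LmX\<close>)
    also have "take (Ln - (Lm - (j - Lm))) ([1] @ X) = [1] @ take b X"
    proof -
      have "Ln - (Lm - (j - Lm)) = Suc b" using 4 LnLm unfolding b_def by linarith
      then show ?thesis by simp
    qed
    also have "take b X = take b W" using pre bL by simp
    also have "drop (j - Lm) X = drop (Suc b) W" using suf[of "Suc b"] jb2 by simp
    finally have e: "take Ln (drop j (X @ (X @ [1] @ X))) = drop (Suc b) W @ [1] @ take b W" .
    have "sum_list W = sum_list (take b W) + W ! b + sum_list (drop (Suc b) W)"
      using sum_split_nth bL unfolding Ln_def by blast
    then show ?thesis unfolding WS W_def[symmetric] Ln_def[symmetric] e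
      using Wset[OF bL] by auto
  next
    case 5
    have "take Ln (drop j (X @ (X @ [1] @ X))) = take Ln (drop (j - Lm) (X @ [1] @ X))"
      by (rule td_out[OF LmX]) (use 5 LnLm in \<open>simp_all add: LmX\<close>)
    also have "\<dots> = take Ln (drop (j - Lm - Lm) ([1] @ X))"
      by (rule td_out[OF LmX]) (use 5 LnLm in \<open>simp_all add: LmX\<close>)
    also have "\<dots> = take Ln (drop (j - 2 * Lm - 1) X)"
      using 5 by (subst td_out[of "[1]" 1]) (simp_all add: mult_2)
    finally have e: "take Ln (drop j (X @ (X @ [1] @ X))) = take Ln (drop (j - 2 * Lm - 1) X)" .
    show ?thesis unfolding WS W_def[symmetric] Ln_def[symmetric] e
      using IH[of "j - 2 * Lm - 1"] 5 jb by simp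
  qed
qed

lemma card_sum_ind: "card {i. i < (L::nat) \<and> P i} = (\<Sum>i<L. if P i then 1 else (0::nat))"
proof -
  have "(\<Sum>i<L. if P i then 1 else (0::nat)) = (\<Sum>i\<in>{..<L} \<inter> {x. P x}. 1)"
    by (subst sum.If_cases) auto
  also have "{..<L} \<inter> {x. P x} = {i. i < L \<and> P i}" by auto
  finally show ?thesis by simp
qed

lemma counting:
  fixes a b :: "nat list"
  assumes len: "length b = length a" and sa: "set a \<subseteq> {0,1}" and sb: "set b \<subseteq> {0,1}"
  shows "card {i. i < length a \<and> a ! i \<noteq> b ! i} + sum_list b
           = 2 * card {i. i < length a \<and> a ! i = 0 \<and> b ! i = 1} + sum_list a"
    and "card {i. i < length a \<and> a ! i = 0} + sum_list a = length a"
proof -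
  let ?L = "length a"
  have ab: "a ! i \<in> {0,1}" "b ! i \<in> {0,1}" if "i < ?L" for i
    using sa sb that len nth_mem by (metis subsetD, metis subsetD)
  have SA: "sum_list a = (\<Sum>i<?L. a ! i)" by (simp add: sum_list_sum_nth atLeast0LessThan)
  have SB: "sum_list b = (\<Sum>i<?L. b ! i)" using len by (simp add: sum_list_sum_nth atLeast0LessThan)
  have "card {i. i < ?L \<and> a ! i \<noteq> b ! i} + sum_list b
        = (\<Sum>i<?L. (if a ! i \<noteq> b ! i then 1 else 0) + b ! i)"
    by (simp add: card_sum_ind SB sum.distrib)
  also have "\<dots> = (\<Sum>i<?L. 2 * (if a ! i = 0 \<and> b ! i = 1 then 1 else 0) + a ! i)"
  proof (rule sum.cong)
    fix i assume "i \<in> {..<?L}"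
    then have "a ! i \<in> {0,1}" "b ! i \<in> {0,1}" using ab by auto
    then show "(if a ! i \<noteq> b ! i then 1 else 0) + b ! i = 2 * (if a ! i = 0 \<and> b ! i = 1 then 1 else 0) + a ! i"
      by auto
  qed simp
  also have "\<dots> = 2 * card {i. i < ?L \<and> a ! i = 0 \<and> b ! i = 1} + sum_list a"
    by (simp add: card_sum_ind SA sum.distrib sum_distrib_left)
  finally show "card {i. i < length a \<and> a ! i \<noteq> b ! i} + sum_list b
           = 2 * card {i. i < length a \<and> a ! i = 0 \<and> b ! i = 1} + sum_list a" .
  have "card {i. i < ?L \<and> a ! i = 0} + sum_list a
        = (\<Sum>i<?L. (if a ! i = 0 then 1 else 0) + a ! i)"
    by (simp add: card_sum_ind SA sum.distrib)
  also have "\<dots> = (\<Sum>i<?L. 1)"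
  proof (rule sum.cong)
    fix i assume "i \<in> {..<?L}"
    then have "a ! i \<in> {0,1}" using ab by auto
    then show "(if a ! i = 0 then 1 else 0) + a ! i = 1" by auto
  qed simp
  finally show "card {i. i < length a \<and> a ! i = 0} + sum_list a = length a" by simp
qed

lemma ineq:
  fixes D A Z L e :: real
  assumes "L \<ge> 1" "3*Z = 2*L+1" "D + e = 2*A" "0 \<le> e" "e \<le> 1" "0 \<le> A" "A \<le> Z"
  shows "\<bar>D/L - 4/3*(A/Z)\<bar> \<le> 3/L"
proof -
  have Z: "Z = (2*L+1)/3" using assms(2) by simp
  have Dd: "D = 2*A - e" using assms(3) by simp
  have eq: "D/L - 4/3*(A/Z) = 2*A/(L*(2*L+1)) - e/L"
  proof -
    have L0: "L \<noteq> 0" "2*L+1 \<noteq> 0" using assms(1) by auto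
    have 1: "4/3*(A/Z) = 4*A/(2*L+1)" unfolding Z by simp
    have 2: "D/L = 2*A/L - e/L" unfolding Dd by (simp add: diff_divide_distrib)
    have 3: "2*A/L = 2*A*(2*L+1)/(L*(2*L+1))" using L0 by simp
    have 4: "4*A/(2*L+1) = 4*A*L/(L*(2*L+1))" using L0 by simp
    have 5: "2*A*(2*L+1)/(L*(2*L+1)) - 4*A*L/(L*(2*L+1)) = (2*A*(2*L+1) - 4*A*L)/(L*(2*L+1))"
      by (simp add: diff_divide_distrib)
    have 6: "2*A*(2*L+1) - 4*A*L = 2*A" by (simp add: algebra_simps)
    show ?thesis unfolding 1 2 using 3 4 5 6 by simp
  qed
  have b1: "0 \<le> 2*A/(L*(2*L+1))" using assms by simp
  have "2*A \<le> 2*L+1" using assms by simp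
  then have b2: "2*A/(L*(2*L+1)) \<le> 1/L" using assms(1)
    by (simp add: divide_simps)
  have b3: "0 \<le> e/L" "e/L \<le> 1/L" using assms by (simp_all add: divide_right_mono)
  have "\<bar>2*A/(L*(2*L+1)) - e/L\<bar> \<le> 2/L" using b1 b2 b3 by (simp add: abs_le_iff) 
  also have "\<dots> \<le> 3/L" using assms(1) by (simp add: divide_right_mono)
  finally show ?thesis using eq by simp
qed

lemma conv_rel:
  fixes f g :: "nat \<Rightarrow> real"
  assumes h: "(\<lambda>n. f n - 4/3 * g n) \<longlonglongrightarrow> 0"
  shows "(convergent f \<longleftrightarrow> convergent g) \<and> (convergent g \<longrightarrow> lim f = 4/3 * lim g)"
proof -
  have fg: "f \<longlonglongrightarrow> 4/3 * l" if "g \<longlonglongrightarrow> l" for l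
  proof -
    have "(\<lambda>n. (f n - 4/3 * g n) + 4/3 * g n) \<longlonglongrightarrow> 0 + 4/3 * l"
      by (intro tendsto_intros h that)
    then show ?thesis by simp
  qed
  have gf: "g \<longlonglongrightarrow> 3/4 * l" if "f \<longlonglongrightarrow> l" for l
  proof -
    have "(\<lambda>n. 3/4 * (f n - (f n - 4/3 * g n))) \<longlonglongrightarrow> 3/4 * (l - 0)"
      by (intro tendsto_intros h that)
    then show ?thesis by simp
  qed
  show ?thesis
  proof (intro conjI impI iffI)
    assume "convergent f" then show "convergent g" using gf unfolding convergent_def by blast
  next
    assume "convergent g" then show "convergent f" using fg unfolding convergent_def by blast
  next
    assume "convergent g"
    then have "g \<longlonglongrightarrow> lim g" by (simp add: convergent_LIMSEQ_iff)
    then show "lim f = 4/3 * lim g" using fg limI by blast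
  qed
qed

theorem lemma3:
  fixes i :: nat
  assumes "i > 0"
  shows "(convergent (\<lambda>n. hdist (Wm n) (alpha i n)) \<longleftrightarrow>
            convergent (\<lambda>n. hdist0 (Wm n) (alpha i n)))
       \<and> (convergent (\<lambda>n. hdist0 (Wm n) (alpha i n)) \<longrightarrow>
            lim (\<lambda>n. hdist (Wm n) (alpha i n)) = 4 / 3 * lim (\<lambda>n. hdist0 (Wm n) (alpha i n)))"
proof -
  define f where "f = (\<lambda>n. hdist (Wm n) (alpha i n))"
  define g where "g = (\<lambda>n. hdist0 (Wm n) (alpha i n))"
  have bound: "norm (f n - 4/3 * g n) \<le> 3 / real (Suc n)" for n
  proof -
    define a where "a = Wm n"
    define L where "L = length a"
    define M where "M = i + L + n"
    have nM: "n \<le> M" unfolding M_def by simp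
    have iLM: "i + L \<le> length (Wm M)" using Wm_len_ge[of M] unfolding M_def by simp
    define b where "b = alpha i n"
    have bt: "b = take L (drop i (Wm M))" unfolding b_def L_def a_def
      by (rule alpha_eq[OF nM]) (use iLM in \<open>simp add: L_def a_def\<close>)
    have lenb: "length b = length a" using bt iLM unfolding L_def by simp
    have seta: "set a \<subseteq> {0,1}" unfolding a_def by (rule Wm_set)
    have setb: "set b \<subseteq> {0,1}" unfolding bt using Wm_set[of M]
      by (meson in_set_dropD in_set_takeD subset_iff)
    have win: "sum_list b \<in> {sum_list a, Suc (sum_list a)}"
      unfolding bt L_def a_def by (rule window[OF nM]) (use iLM in \<open>simp add: L_def a_def\<close>)
    define D where "D = card {i. i < length a \<and> a ! i \<noteq> b ! i}"
    define A where "A = card {i. i < length a \<and> a ! i = 0 \<and> b ! i = 1}"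
    define Z where "Z = card {i. i < length a \<and> a ! i = 0}"
    have c1: "D + sum_list b = 2 * A + sum_list a" unfolding D_def A_def by (rule counting(1)[OF lenb seta setb])
    have c2: "Z + sum_list a = L" unfolding Z_def L_def by (rule counting(2)[OF lenb seta setb])
    have AZ: "A \<le> Z" unfolding A_def Z_def by (rule card_mono) auto
    have l1: "2 * L + 1 = 3 * 3 ^ n" using Wm_len[of n] unfolding L_def a_def by simp
    have l2: "2 * sum_list a + 1 = 3 ^ n" using Wm_sum[of n] unfolding a_def by simp
    have Z3: "3 * Z = 2 * L + 1" using l1 l2 c2 by linarith
    define e where "e = sum_list b - sum_list a"
    have e01: "e \<le> 1" "sum_list b = sum_list a + e" using win unfolding e_def by auto
    have De: "D + e = 2 * A" using c1 e01 by linarith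
    have L1: "L \<ge> Suc n" unfolding L_def a_def by (rule Wm_len_ge)
    have fn: "f n = real D / real L" unfolding f_def hdist_def D_def L_def a_def b_def by simp
    have gn: "g n = real A / real Z" unfolding g_def hdist0_def A_def Z_def a_def b_def by simp
    have "\<bar>real D / real L - 4/3 * (real A / real Z)\<bar> \<le> 3 / real L"
    proof (rule ineq[where e="real e"])
      have "real (D + e) = real (2 * A)" using De by simp
      then show "real D + real e = 2 * real A" by simp
      have "real (3 * Z) = real (2 * L + 1)" using Z3 by simp
      then show "3 * real Z = 2 * real L + 1" by simp
    qed (use L1 e01 AZ in simp_all)
    also have "\<dots> \<le> 3 / real (Suc n)" using L1
      by (intro divide_left_mono) simp_all
    finally show ?thesis unfolding fn gn by simp
  qed
  have z: "(\<lambda>n. 3 / real (Suc n)) \<longlonglongrightarrow> 0"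
  proof -
    have "(\<lambda>n. 3 * inverse (real (Suc n))) \<longlonglongrightarrow> 3 * 0"
      by (intro tendsto_intros LIMSEQ_inverse_real_of_nat)
    then show ?thesis by (simp add: divide_inverse)
  qed
  have "(\<lambda>n. f n - 4/3 * g n) \<longlonglongrightarrow> 0"
  proof (rule tendsto_0_le[OF z, where K=1])
    show "\<forall>\<^sub>F n in sequentially. norm (f n - 4/3 * g n) \<le> norm (3 / real (Suc n)) * 1"
      using bound by simp
  qed
  from conv_rel[OF this] show ?thesis unfolding f_def g_def .
qed

end
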